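(* Let $G$ be a $d$-regular graph of girth at least 7. Then for every integer $1\le k<d$ and every set $S$ of $k$ vertices, $|N^2(S)|\ge\frac{kd^2}{2}$.
   Context: For a set $S$ of vertices, $N^2(S)$ denotes the set of vertices at distance exactly 2 from some vertex of $S$ (not required to be disjoint from $S$). The girth is the length of a shortest cycle. *)

theory Defs
  imports Complex_Main "HOL-Library.Extended_Nat"
begin

definition sgraph :: "'a set \<Rightarrow> ('a \<Rightarrow> 'a \<Rightarrow> bool) \<Rightarrow> bool" where
  "sgraph V E \<longleftrightarrow> finite V \<and> (\<forall>u v. E u v \<longrightarrow> u \<in> V \<and> v \<in> V)
     \<and> (\<forall>u v. E u v \<longrightarrow> E v u) \<and> (\<forall>v. \<not> E v v)"

definition degree :: "'a set \<Rightarrow> ('a \<Rightarrow> 'a \<Rightarrow> bool) \<Rightarrow> 'a \<Rightarrow> nat" where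
  "degree V E v = card {u \<in> V. E v u}"

definition regular :: "'a set \<Rightarrow> ('a \<Rightarrow> 'a \<Rightarrow> bool) \<Rightarrow> nat \<Rightarrow> bool" where
  "regular V E d \<longleftrightarrow> (\<forall>v \<in> V. degree V E v = d)"

fun walk :: "'a set \<Rightarrow> ('a \<Rightarrow> 'a \<Rightarrow> bool) \<Rightarrow> 'a list \<Rightarrow> bool" where
  "walk V E [] = False"
| "walk V E [v] = (v \<in> V)"
| "walk V E (u # v # vs) = (u \<in> V \<and> E u v \<and> walk V E (v # vs))"

definition is_cycle :: "'a set \<Rightarrow> ('a \<Rightarrow> 'a \<Rightarrow> bool) \<Rightarrow> 'a list \<Rightarrow> bool" where
  "is_cycle V E cs \<longleftrightarrow> length cs \<ge> 3 \<and> distinct cs \<and> walk V E cs \<and> E (last cs) (hd cs)"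

text \<open>Girth: length of a shortest cycle (infinity if acyclic).\<close>
definition girth :: "'a set \<Rightarrow> ('a \<Rightarrow> 'a \<Rightarrow> bool) \<Rightarrow> enat" where
  "girth V E = (INF cs \<in> {cs. is_cycle V E cs}. enat (length cs))"

text \<open>Graph distance: number of edges of a shortest walk (infinity if none).\<close>
definition dist :: "'a set \<Rightarrow> ('a \<Rightarrow> 'a \<Rightarrow> bool) \<Rightarrow> 'a \<Rightarrow> 'a \<Rightarrow> enat" where
  "dist V E u v = (INF xs \<in> {xs. walk V E xs \<and> hd xs = u \<and> last xs = v}. enat (length xs - 1))"

definition N2 :: "'a set \<Rightarrow> ('a \<Rightarrow> 'a \<Rightarrow> bool) \<Rightarrow> 'a set \<Rightarrow> 'a set" where
  "N2 V E S = {v \<in> V. \<exists>s \<in> S. dist V E s v = 2}"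

end

theory Submission
  imports Defs
begin

lemma sgE:
  assumes "sgraph V E" "E u v"
  shows "u \<in> V" "v \<in> V" "E v u" "u \<noteq> v"
  using assms unfolding sgraph_def by metis+

lemma cyc_len:
  assumes "girth V E \<ge> 7" "is_cycle V E cs"
  shows "length cs \<ge> 7"
proof -
  have "girth V E \<le> enat (length cs)" unfolding girth_def using assms(2) by (auto intro: INF_lower)
  then have "(7::enat) \<le> enat (length cs)" using assms(1) by order
  thus ?thesis by (simp add: numeral_eq_enat)
qed

lemma no_tri:
  assumes sg: "sgraph V E" and g: "girth V E \<ge> 7" and "E a b" "E b c" "E c a"
  shows False
proof -
  have "is_cycle V E [a,b,c]" unfolding is_cycle_def
    using assms sgE[OF sg] by auto
  from cyc_len[OF g this] show False by simp
qed

lemma no_sq: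
  assumes sg: "sgraph V E" and g: "girth V E \<ge> 7" and "E a b" "E b c" "E c e" "E e a"
    "a \<noteq> c" "b \<noteq> e"
  shows False
proof -
  have "is_cycle V E [a,b,c,e]" unfolding is_cycle_def
    using assms sgE[OF sg] by auto
  from cyc_len[OF g this] show False by simp
qed

lemma no_hex:
  assumes sg: "sgraph V E" and g: "girth V E \<ge> 7" and "E a b" "E b c" "E c e" "E e f" "E f h" "E h a"
    "distinct [a,b,c,e,f,h]"
  shows False
proof -
  have "is_cycle V E [a,b,c,e,f,h]" unfolding is_cycle_def
    using assms sgE[OF sg] by auto
  from cyc_len[OF g this] show False by simp
qed

lemma walk_hd: "walk V E xs \<Longrightarrow> hd xs \<in> V"
  by (induct V E xs rule: walk.induct) auto

lemma dist2:
  assumes sg: "sgraph V E"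
  shows "dist V E s v = 2 \<longleftrightarrow> s \<noteq> v \<and> \<not> E s v \<and> (\<exists>w. E s w \<and> E w v)"
proof
  let ?W = "{xs. walk V E xs \<and> hd xs = s \<and> last xs = v}"
  let ?f = "\<lambda>xs. enat (length xs - 1)"
  assume h: "dist V E s v = 2"
  have dd: "dist V E s v = Inf (?f ` ?W)" by (simp add: dist_def)
  have ne: "?W \<noteq> {}"
  proof
    assume "?W = {}"
    then have e: "?f ` ?W = {}" by blast
    have "dist V E s v = \<infinity>" unfolding dd by (simp only: e Inf_enat_def if_True simp_thms)
    with h show False by simp
  qed
  then have ne2: "?f ` ?W \<noteq> {}" by blast
  have eq: "Inf (?f ` ?W) = (LEAST x. x \<in> ?f ` ?W)" unfolding Inf_enat_def using ne2 by (simp only: if_False)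
  have ex: "\<exists>x. x \<in> ?f ` ?W" using ne2 by (simp only: ex_in_conv not_False_eq_True)
  have mem: "(LEAST x. x \<in> ?f ` ?W) \<in> ?f ` ?W" using ex by (rule LeastI_ex)
  have "dist V E s v \<in> ?f ` ?W" using dd eq mem by (simp only:)
  then have "2 \<in> ?f ` ?W" using h by (simp only:)
  then obtain xs where xs4': "2 = ?f xs" and xsW: "xs \<in> ?W" by (rule imageE)
  from xs4' have xs4: "?f xs = 2" by (rule sym)
  from xsW have xsc: "walk V E xs \<and> hd xs = s \<and> last xs = v" by (simp only: mem_Collect_eq)
  then have xs: "walk V E xs" "hd xs = s" "last xs = v" by simp_all
  have "enat (length xs - 1) = enat 2" using xs4 by (simp add: numeral_eq_enat)
  then have l2: "length xs - 1 = 2" by (simp only: enat.inject)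
  have "xs \<noteq> []" using xs(1) by auto
  then have l3: "length xs = 3" using l2 by (cases xs) auto
  then obtain a b c where abc: "xs = [a,b,c]" by (auto simp: length_Suc_conv numeral_3_eq_3)
  have sV: "s \<in> V" using walk_hd[OF xs(1)] xs(2) by simp
  have low: "\<And>ys. ys \<in> ?W \<Longrightarrow> dist V E s v \<le> ?f ys" unfolding dd by (rule INF_lower)
  have "s \<noteq> v"
  proof
    assume "s = v"
    then have "[s] \<in> ?W" using sV by simp
    from low[OF this] h show False by simp
  qed
  moreover have "\<not> E s v"
  proof
    assume "E s v"
    then have "[s,v] \<in> ?W" using sgE[OF sg] by simp
    from low[OF this] h show False by (simp add: one_enat_def numeral_eq_enat)
  qed
  moreover have "E s b \<and> E b v" using xs abc by simp
  ultimately show "s \<noteq> v \<and> \<not> E s v \<and> (\<exists>w. E s w \<and> E w v)" by blast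
next
  let ?W = "{xs. walk V E xs \<and> hd xs = s \<and> last xs = v}"
  let ?f = "\<lambda>xs. enat (length xs - 1)"
  assume h: "s \<noteq> v \<and> \<not> E s v \<and> (\<exists>w. E s w \<and> E w v)"
  then obtain w where w: "E s w" "E w v" by blast
  have dd: "dist V E s v = Inf (?f ` ?W)" by (simp add: dist_def)
  have "[s,w,v] \<in> ?W" using w sgE[OF sg] by simp
  then have "dist V E s v \<le> ?f [s,w,v]" unfolding dd by (rule INF_lower)
  moreover have "?f [s,w,v] = 2" by (simp add: numeral_eq_enat)
  ultimately have le: "dist V E s v \<le> 2" by simp
  have ge: "2 \<le> dist V E s v" unfolding dd
  proof (rule INF_greatest)
    fix xs assume xs: "xs \<in> ?W"
    show "2 \<le> ?f xs"
    proof (cases xs)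
      case Nil then show ?thesis using xs by simp
    next
      case (Cons a ys)
      show ?thesis
      proof (cases ys)
        case Nil then show ?thesis using xs Cons h by auto
      next
        case (Cons b zs)
        show ?thesis
        proof (cases zs)
          case Nil then show ?thesis using xs Cons \<open>xs = a # ys\<close> h by (simp, metis)
        next
          case (Cons c us) then show ?thesis using \<open>ys = b # zs\<close> \<open>xs = a # ys\<close>
            by (simp add: numeral_eq_enat)
        qed
      qed
    qed
  qed
  from le ge show "dist V E s v = 2" by simp
qed


theorem lemma5:
  fixes V :: "'a set" and E :: "'a \<Rightarrow> 'a \<Rightarrow> bool" and d k :: nat and S :: "'a set"
  assumes "sgraph V E"
    and "regular V E d"
    and "girth V E \<ge> 7"
    and "1 \<le> k" and "k < d"
    and "S \<subseteq> V" and "card S = k"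
  shows "real (card (N2 V E S)) \<ge> real k * real d ^ 2 / 2"
proof -
  note sg = assms(1) and g = assms(3)
  define N where "N v = {u\<in>V. E v u}" for v
  define D where "D s = {v\<in>V. dist V E s v = 2}" for s
  have finV: "finite V" using sg by (simp add: sgraph_def)
  have cardN: "\<And>v. v\<in>V \<Longrightarrow> card (N v) = d" using assms(2) by (simp add: regular_def degree_def N_def)
  have finN: "\<And>v. finite (N v)" using finV by (simp add: N_def)
  have finD: "\<And>s. finite (D s)" using finV by (simp add: D_def)
  have irr: "\<And>u. \<not> E u u" using sg by (simp add: sgraph_def)
  have Dchar: "v \<in> D s \<longleftrightarrow> s \<noteq> v \<and> \<not> E s v \<and> (\<exists>w. E s w \<and> E w v)" for s v
    unfolding D_def using dist2[OF sg, of s v] sgE[OF sg] by blast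
  have F1: "real (card (D s)) \<ge> real d * (real d - 1)" if sV: "s \<in> V" for s
  proof -
    let ?U = "\<Union>w\<in>N s. N w - {s}"
    have sub: "?U \<subseteq> D s"
    proof
      fix v assume "v \<in> ?U"
      then obtain w where w: "E s w" "E w v" "v \<noteq> s" by (auto simp: N_def)
      have "\<not> E s v"
      proof
        assume "E s v"
        then have "E v s" using sgE[OF sg] by blast
        from no_tri[OF sg g w(1) w(2) this] show False .
      qed
      then show "v \<in> D s" using Dchar w by blast
    qed
    have disj: "\<forall>w1\<in>N s. \<forall>w2\<in>N s. w1 \<noteq> w2 \<longrightarrow> (N w1 - {s}) \<inter> (N w2 - {s}) = {}"
    proof (intro ballI impI)
      fix w1 w2 assume w1: "w1 \<in> N s" and w2: "w2 \<in> N s" and ne: "w1 \<noteq> w2"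
      show "(N w1 - {s}) \<inter> (N w2 - {s}) = {}"
      proof (rule ccontr)
        assume "(N w1 - {s}) \<inter> (N w2 - {s}) \<noteq> {}"
        then obtain v where v: "E w1 v" "E w2 v" "v \<noteq> s" by (auto simp: N_def)
        have e1: "E s w1" using w1 by (simp add: N_def)
        have e3: "E v w2" using v sgE[OF sg] by blast
        have e4: "E w2 s" using w2 sgE[OF sg] by (simp add: N_def)
        have "s \<noteq> v" using v by simp
        from no_sq[OF sg g e1 v(1) e3 e4 this ne] show False .
      qed
    qed
    have "card ?U = (\<Sum>w\<in>N s. card (N w - {s}))" using disj finN by (intro card_UN_disjoint) auto
    also have "\<dots> = (\<Sum>w\<in>N s. d - 1)"
    proof (rule sum.cong[OF refl])
      fix w assume "w \<in> N s"
      then have "s \<in> N w" "w \<in> V" using sgE[OF sg] by (auto simp: N_def)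
      then show "card (N w - {s}) = d - 1" using cardN finN by (simp add: card_Diff_singleton)
    qed
    also have "\<dots> = d * (d - 1)" using cardN[OF sV] by simp
    finally have "d * (d-1) \<le> card (D s)" using card_mono[OF finD sub] by simp
    then have "real (d * (d-1)) \<le> real (card (D s))" by linarith
    moreover have "real (d*(d-1)) \<ge> real d * (real d - 1)" by (cases d) (auto simp: algebra_simps)
    ultimately show ?thesis by linarith
  qed
  have F2: "card (D s \<inter> D t) \<le> d" if sV: "s\<in>V" and tV: "t\<in>V" and st: "s \<noteq> t" for s t
  proof (cases "\<exists>w. E s w \<and> E t w")
    case True
    then obtain w where w: "E s w" "E t w" by blast
    have "D s \<inter> D t \<subseteq> N w"
    proof
      fix v assume v: "v \<in> D s \<inter> D t"
      have vs: "s \<noteq> v \<and> \<not> E s v \<and> (\<exists>w. E s w \<and> E w v)" using v Dchar[of v s] by simp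
      have vt: "t \<noteq> v \<and> \<not> E t v \<and> (\<exists>w. E t w \<and> E w v)" using v Dchar[of v t] by simp
      from vs obtain a where a1: "E s a" "E a v" by blast
      from vt obtain b where b1: "E t b" "E b v" by blast
      have ab: "E s a" "E a v" "E t b" "E b v" "s\<noteq>v" "\<not>E s v" "t\<noteq>v" "\<not>E t v"
        using a1 b1 vs vt by simp_all
      show "v \<in> N w"
      proof (rule ccontr)
        assume nv: "v \<notin> N w"
        have wV: "v \<in> V" using ab(2) sgE[OF sg] by blast
        have aw: "a \<noteq> w" "b \<noteq> w" using nv ab(2) ab(4) wV unfolding N_def by auto
        show False
        proof (cases "a = b")
          case True
          have "E a t" "E w s" using ab(3) True w(1) sgE(3)[OF sg] by auto
          from no_sq[OF sg g ab(1) this(1) w(2) this(2) st aw(1)] show False .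
        next
          case False
          have "E v b" "E b t" "E w s" using ab(3) ab(4) w(1) sgE(3)[OF sg] by auto
          moreover have "distinct [s,a,v,b,t,w]" using ab w False aw st irr by auto
          ultimately show False using no_hex[OF sg g ab(1) ab(2) _ _ w(2)] by blast
        qed
      qed
    qed
    then have "card (D s \<inter> D t) \<le> card (N w)" using card_mono[OF finN] by blast
    also have "card (N w) = d" using cardN sgE[OF sg w(1)] by blast
    finally show ?thesis .
  next
    case False
    define a where "a v = (SOME x. E s x \<and> E x v)" for v
    have a: "E s (a v) \<and> E (a v) v" if "v \<in> D s" for v
    proof -
      have "\<exists>x. E s x \<and> E x v" using Dchar that by blast
      then show ?thesis unfolding a_def by (rule someI_ex)
    qed
    have "inj_on a (D s \<inter> D t)"
    proof (rule inj_onI)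
      fix v v' assume v: "v \<in> D s \<inter> D t" and v': "v' \<in> D s \<inter> D t" and eq: "a v = a v'"
      show "v = v'"
      proof (rule ccontr)
        assume ne: "v \<noteq> v'"
        define x where "x = a v"
        have vD: "v \<in> D s" "v' \<in> D s" using v v' by auto
        have x: "E s x" "E x v" "E x v'" using a[OF vD(1)] a[OF vD(2)] eq unfolding x_def by auto
        have vt: "t \<noteq> v \<and> \<not> E t v \<and> (\<exists>w. E t w \<and> E w v)" using v Dchar[of v t] by simp
        have vt': "t \<noteq> v' \<and> \<not> E t v' \<and> (\<exists>w. E t w \<and> E w v')" using v' Dchar[of v' t] by simp
        obtain b where b: "E t b" "E b v" using vt by blast
        obtain b' where b': "E t b'" "E b' v'" using vt' by blast
        have nv: "\<not> E t v" "\<not> E t v'" "t \<noteq> v" "t \<noteq> v'" using vt vt' by simp_all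
        have xb: "x \<noteq> b" "x \<noteq> b'" using False x(1) b(1) b'(1) by auto
        show False
        proof (cases "b = b'")
          case True
          have "E v b" "E b v'" "E v' x" using b(2) b'(2) True x(3) sgE(3)[OF sg] by auto
          from no_sq[OF sg g x(2) this xb(1) ne] show False .
        next
          case bb: False
          have "E v b" "E b t" "E b' v'" "E v' x" using b b'(2) x(3) sgE(3)[OF sg] by auto
          moreover have "distinct [x,v,b,t,b',v']" using x b b' bb xb nv ne irr by auto
          ultimately show False using no_hex[OF sg g x(2) _ _ b'(1)] by blast
        qed
      qed
    qed
    moreover have "a ` (D s \<inter> D t) \<subseteq> N s" using a sgE[OF sg] by (auto simp: N_def)
    ultimately have "card (D s \<inter> D t) \<le> card (N s)" using finN by (intro card_inj_on_le) auto
    then show ?thesis using cardN[OF sV] by simp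
  qed
  have bonf: "F \<subseteq> V \<Longrightarrow> real (card (\<Union>s\<in>F. D s)) \<ge> real (card F) * (real d * (real d - 1))
      - real d * real (card F) * (real (card F) - 1) / 2" if "finite F" for F
    using that
  proof (induction F rule: finite_induct)
    case empty show ?case by simp
  next
    case (insert x F)
    let ?U = "\<Union>s\<in>F. D s"
    have xV: "x\<in>V" and FV: "F \<subseteq> V" using insert by auto
    have IH: "real (card ?U) \<ge> real (card F) * (real d * (real d - 1))
      - real d * real (card F) * (real (card F) - 1) / 2" using insert FV by blast
    have finU: "finite ?U" using insert finD by auto
    have cu: "card (D x) + card ?U = card (D x \<union> ?U) + card (D x \<inter> ?U)"
      using card_Un_Int[OF finD finU] by blast
    have eqU: "D x \<inter> ?U = (\<Union>s\<in>F. D x \<inter> D s)" by blast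
    have "card (D x \<inter> ?U) \<le> (\<Sum>s\<in>F. card (D x \<inter> D s))" unfolding eqU by (rule card_UN_le[OF insert(1)])
    also have "\<dots> \<le> (\<Sum>s\<in>F. d)" using F2 xV FV insert(2) by (intro sum_mono) auto
    also have "\<dots> = card F * d" by simp
    finally have ci: "card (D x \<inter> ?U) \<le> card F * d" .
    have ex: "(\<Union>s\<in>insert x F. D s) = D x \<union> ?U" by simp
    have cins: "card (insert x F) = card F + 1" using insert by simp
    have F1x: "real (card (D x)) \<ge> real d * (real d - 1)" using F1[OF xV] .
    have r1: "real (card (D x \<union> ?U)) = real (card (D x)) + real (card ?U) - real (card (D x \<inter> ?U))"
      using cu by linarith
    have r2: "real (card (D x \<inter> ?U)) \<le> real (card F) * real d" using ci
      by (metis of_nat_le_iff of_nat_mult)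
    have eqn: "real (card F + 1) * (real d * (real d - 1)) - real d * real (card F + 1) * (real (card F + 1) - 1) / 2
       = real d * (real d - 1) + (real (card F) * (real d * (real d - 1)) - real d * real (card F) * (real (card F) - 1) / 2) - real (card F) * real d"
      by (simp add: field_simps)
    show ?case unfolding ex cins eqn using r1 r2 F1x IH by linarith
  qed
  have N2eq: "N2 V E S = (\<Union>s\<in>S. D s)" by (auto simp: N2_def D_def)
  have finS: "finite S" using finV assms(6) finite_subset by blast
  from bonf[OF finS assms(6)] have
    c: "real (card (N2 V E S)) \<ge> real k*(real d*(real d-1)) - real d*real k*(real k-1)/2"
    using N2eq assms(7) by simp
  have e: "real k*(real d*(real d-1)) - real d*real k*(real k-1)/2 - real k*real d^2/2
     = real k*real d*(real d - real k - 1)/2" by (simp add: field_simps power2_eq_square)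
  have "real d - real k - 1 \<ge> 0" using assms(5) by linarith
  then have "real k * real d * (real d - real k - 1) / 2 \<ge> 0" by simp
  with c e show ?thesis by linarith
qed

end
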